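(* Consider the $N$-SP bandwidth allocation game with minimum small-cell bandwidth constraints described in the context, and let $a=N_f\lambda_S^{1/\alpha-1}$. If $$\frac{a}{a+N_m}\sum_{i\in\mathcal N}B_i<\sum_{i\in\mathcal N}B_{i,S}^0,$$ then $\mathrm{SW}_{\mathrm{w}}^{\mathrm{NE}}<\mathrm{SW}_{\mathrm{wo}}^{*}$ (a social welfare loss is incurred). Moreover, in all cases $$\frac{\mathrm{SW}_{\mathrm{w}}^{\mathrm{NE}}}{\mathrm{SW}_{\mathrm{wo}}^{*}}\ge\Big(\frac{a}{a+N_m}\Big)^{\alpha},$$ and this bound is attained exactly when $B_{i,S}^0=B_i$ for all $i\in\mathcal N$.
   Context: A set $\mathcal N$ of $N$ service providers (SPs). SP $i$ owns bandwidth $B_i>0$ and chooses macro-cell bandwidth $B_{i,M}\ge0$ and small-cell bandwidth $B_{i,S}$ with $B_{i,M}+B_{i,S}\le B_i$ and $B_{i,S}\ge B_{i,S}^0$ (regulatory constraint), where $0\le B_{i,S}^0\le B_i$ are given. Parameters: $R_0>0$, $\lambda_S>1$, a mass $N_m>0$ of mobile users (served only by macro-cells) and a mass $N_f>0$ of fixed users, each with utility $u(r)=r^{1-\alpha}/(1-\alpha)$, $\alpha\in(0,1)$. Second-stage prices are market-clearing: with $R_M=\frac{R_0\sum_iB_{i,M}}{N_m}$ and $R_S=\frac{\lambda_SR_0\sum_iB_{i,S}}{N_f}$, the macro and small-cell prices are $u'(R_M)=R_M^{-\alpha}$ and $u'(R_S)=R_S^{-\alpha}$, and each mobile user receives rate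 $R_M$ and each fixed user rate $R_S$. SP $i$'s payoff in the bandwidth game is its revenue $S_i=\lambda_SB_{i,S}R_0R_S^{-\alpha}+B_{i,M}R_0R_M^{-\alpha}$. Social welfare is $\mathrm{SW}=N_mu(R_M)+N_fu(R_S)$. $\mathrm{SW}_{\mathrm{w}}^{\mathrm{NE}}$ denotes the social welfare at the Nash equilibrium of the game with the regulatory constraints, and $\mathrm{SW}_{\mathrm{wo}}^{*}$ the social welfare at the Nash equilibrium of the game without them ($B_{i,S}^0=0$), which equals the maximal social welfare without constraints. *)

theory Defs
  imports Complex_Main
begin

text \<open>Bandwidth allocation game. SPs are indexed by a finite set I; a strategy profile
is a pair of functions BM (macro-cell bandwidth) and BS (small-cell bandwidth) on I.\<close>

definition feasible :: "'i set \<Rightarrow> ('i \<Rightarrow> real) \<Rightarrow> ('i \<Rightarrow> real) \<Rightarrow> ('i \<Rightarrow> real) \<Rightarrow> ('i \<Rightarrow> real) \<Rightarrow> bool" where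
  "feasible I B B0 BM BS \<longleftrightarrow> (\<forall>i\<in>I. BM i \<ge> 0 \<and> BS i \<ge> B0 i \<and> BM i + BS i \<le> B i)"

definition rate_M :: "real \<Rightarrow> real \<Rightarrow> 'i set \<Rightarrow> ('i \<Rightarrow> real) \<Rightarrow> real" where
  "rate_M R0 Nm I BM = R0 * (\<Sum>i\<in>I. BM i) / Nm"

definition rate_S :: "real \<Rightarrow> real \<Rightarrow> real \<Rightarrow> 'i set \<Rightarrow> ('i \<Rightarrow> real) \<Rightarrow> real" where
  "rate_S R0 lS Nf I BS = lS * R0 * (\<Sum>i\<in>I. BS i) / Nf"

definition util :: "real \<Rightarrow> real \<Rightarrow> real" where
  "util \<alpha> r = r powr (1 - \<alpha>) / (1 - \<alpha>)"

text \<open>Revenue of SP i; prices are u'(R) = R powr (-alpha).\<close>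
definition revenue :: "real \<Rightarrow> real \<Rightarrow> real \<Rightarrow> real \<Rightarrow> real \<Rightarrow> 'i set \<Rightarrow>
    ('i \<Rightarrow> real) \<Rightarrow> ('i \<Rightarrow> real) \<Rightarrow> 'i \<Rightarrow> real" where
  "revenue R0 lS Nm Nf \<alpha> I BM BS i =
     lS * BS i * R0 * (rate_S R0 lS Nf I BS) powr (-\<alpha>)
     + BM i * R0 * (rate_M R0 Nm I BM) powr (-\<alpha>)"

definition social_welfare :: "real \<Rightarrow> real \<Rightarrow> real \<Rightarrow> real \<Rightarrow> real \<Rightarrow> 'i set \<Rightarrow>
    ('i \<Rightarrow> real) \<Rightarrow> ('i \<Rightarrow> real) \<Rightarrow> real" where
  "social_welfare R0 lS Nm Nf \<alpha> I BM BS =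
     Nm * util \<alpha> (rate_M R0 Nm I BM) + Nf * util \<alpha> (rate_S R0 lS Nf I BS)"

definition is_NE :: "real \<Rightarrow> real \<Rightarrow> real \<Rightarrow> real \<Rightarrow> real \<Rightarrow> 'i set \<Rightarrow> ('i \<Rightarrow> real) \<Rightarrow> ('i \<Rightarrow> real) \<Rightarrow>
    ('i \<Rightarrow> real) \<Rightarrow> ('i \<Rightarrow> real) \<Rightarrow> bool" where
  "is_NE R0 lS Nm Nf \<alpha> I B B0 BM BS \<longleftrightarrow>
     feasible I B B0 BM BS \<and>
     (\<forall>i\<in>I. \<forall>m s. feasible I B B0 (BM(i := m)) (BS(i := s)) \<longrightarrow>
        revenue R0 lS Nm Nf \<alpha> I (BM(i := m)) (BS(i := s)) i \<le> revenue R0 lS Nm Nf \<alpha> I BM BS i)"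

end

theory Submission
  imports Defs "HOL-Analysis.Analysis"
begin



lemma pw_le:
  fixes r a :: real assumes "0<a" "a<1" "r \<ge> 0"
  shows "r powr (1-a) \<le> a + (1-a)*r"
proof (cases "r = 0")
  case True thus ?thesis using assms by simp
next
  case False
  have "r powr (1-a) * 1 powr a \<le> (1-a)*r + a*1"
    by (rule Youngs_inequality_0) (use assms False in auto)
  thus ?thesis by simp
qed

lemma pw_strict:
  fixes r a :: real assumes "0<a" "a<1" "r \<ge> 0" "r \<noteq> 1"
  shows "r powr (1-a) < a + (1-a)*r"
proof (cases "r = 0")
  case True thus ?thesis using assms by simp
next
  case False
  define s where "s = sqrt r"
  have s0: "s > 0" using False assms unfolding s_def by simp
  have s1: "s \<noteq> 1" using assms unfolding s_def by auto
  have rs: "r = s * s" using assms unfolding s_def by simp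
  have "r powr (1-a) = s powr (1-a) * s powr (1-a)" using s0 rs by (simp add: powr_mult)
  moreover have y: "s powr (1-a) \<le> a + (1-a) * s" using pw_le[OF assms(1,2)] s0 by simp
  moreover have "0 \<le> s powr (1-a)" by simp
  ultimately have "r powr (1-a) \<le> (a + (1-a) * s) * (a + (1-a) * s)"
    by (metis mult_mono')
  also have "\<dots> < a + (1-a)*r"
  proof -
    have "a + (1-a)*r - (a + (1-a) * s) * (a + (1-a) * s) = a*(1-a)*(1-s)^2"
      by (simp add: rs algebra_simps power2_eq_square)
    moreover have "a*(1-a)*(1-s)^2 > 0" using assms s1 by simp
    ultimately show ?thesis by linarith
  qed
  finally show ?thesis .
qed

lemma tangent_le:
  fixes u v a :: real assumes "0<a" "a<1" "u \<ge> 0" "v > 0"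
  shows "u powr (1-a) \<le> v powr (1-a) + (1-a) * v powr (-a) * (u - v)"
proof -
  have e1: "u powr (1-a) = v powr (1-a) * (u/v) powr (1-a)"
    using assms by (simp add: powr_divide)
  have e2: "v powr (-a) = v powr (1-a) / v" using assms by (simp add: powr_diff powr_minus_divide)
  have "(u/v) powr (1-a) \<le> a + (1-a)*(u/v)" using pw_le[of a "u/v"] assms by simp
  hence "v powr (1-a) * (u/v) powr (1-a) \<le> v powr (1-a) * (a + (1-a)*(u/v))"
    by (simp add: mult_left_mono)
  also have "\<dots> = v powr (1-a) + (1-a) * v powr (-a) * (u - v)"
    using assms by (simp add: e2 field_simps)
  finally show ?thesis using e1 by simp
qed

lemma tangent_strict:
  fixes u v a :: real assumes "0<a" "a<1" "u \<ge> 0" "v > 0" "u \<noteq> v"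
  shows "u powr (1-a) < v powr (1-a) + (1-a) * v powr (-a) * (u - v)"
proof -
  have e1: "u powr (1-a) = v powr (1-a) * (u/v) powr (1-a)"
    using assms by (simp add: powr_divide)
  have e2: "v powr (-a) = v powr (1-a) / v" using assms by (simp add: powr_diff powr_minus_divide)
  have "(u/v) powr (1-a) < a + (1-a)*(u/v)" using pw_strict[of a "u/v"] assms by simp
  hence "v powr (1-a) * (u/v) powr (1-a) < v powr (1-a) * (a + (1-a)*(u/v))"
    using assms by (simp add: mult_strict_left_mono)
  also have "\<dots> = v powr (1-a) + (1-a) * v powr (-a) * (u - v)"
    using assms by (simp add: e2 field_simps)
  finally show ?thesis using e1 by simp
qed




lemma exch0:
  fixes A C kx ky Y y e a :: real
  assumes "0<a" "a<1" "A>0" "C>0" "kx>0" "ky>0" "0<y" "y\<le>Y" "e>0"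
  shows "\<exists>t>0. t<y \<and> t<e \<and> C*y*(ky*Y) powr (-a) < A*t*(kx*t) powr (-a) + C*(y-t)*(ky*(Y-t)) powr (-a)"
proof -
  define G where "G = A*kx powr (-a)"
  define L where "L = C*(ky*Y) powr (-a)"
  have G0: "G > 0" "L > 0" using assms by (auto simp: G_def L_def)
  define Q where "Q = G/L"
  have Q0: "Q > 0" using G0 by (simp add: Q_def)
  define t where "t = min (min (y/2) (e/2)) ((Q/2) powr (1/a))"
  have t0: "t > 0" "t < y" "t < e" using assms Q0 by (auto simp: t_def)
  have "t powr a \<le> ((Q/2) powr (1/a)) powr a"
    using t0 assms by (intro powr_mono2) (auto simp: t_def)
  also have "\<dots> = Q/2" using assms Q0 by (simp add: powr_powr)
  finally have ta: "t powr a \<le> Q/2" .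
  have tpa: "t powr a > 0" using t0 by simp
  have "A*t*(kx*t) powr (-a) = G * t / t powr a"
    using assms t0 by (simp add: G_def powr_mult powr_minus_divide)
  also have "\<dots> \<ge> G * t / (Q/2)"
    using ta tpa G0 t0 Q0 by (intro divide_left_mono) auto
  finally have g1: "A*t*(kx*t) powr (-a) \<ge> 2 * L * t"
    using G0 by (simp add: Q_def field_simps)
  have "(ky*(Y-t)) powr (-a) \<ge> (ky*Y) powr (-a)"
    using assms t0 by (intro powr_mono2') auto
  hence g2: "C*(y-t)*(ky*(Y-t)) powr (-a) \<ge> (y-t) * L"
    using assms t0 unfolding L_def by (simp add: mult_left_mono)
  have "C*y*(ky*Y) powr (-a) = y * L" by (simp add: L_def)
  also have "\<dots> < 2*L*t + (y-t)*L" using G0 t0 by (simp add: algebra_simps)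
  finally have "C*y*(ky*Y) powr (-a) < A*t*(kx*t) powr (-a) + C*(y-t)*(ky*(Y-t)) powr (-a)"
    using g1 g2 by linarith
  thus ?thesis using t0 by blast
qed

lemma exch:
  fixes A C kx ky X x Y y e a :: real
  assumes "0<a" "a<1" "A>0" "C>0" "kx>0" "ky>0" "X>0" "0\<le>x" "x\<le>X" "0<y" "y\<le>Y" "e>0"
    and cond: "A*(kx*X) powr (-a)*(1 - a*x/X) > C*(ky*Y) powr (-a)*(1 - a*y/Y)"
  shows "\<exists>t>0. t<y \<and> t<e \<and> A*x*(kx*X) powr (-a) + C*y*(ky*Y) powr (-a)
      < A*(x+t)*(kx*(X+t)) powr (-a) + C*(y-t)*(ky*(Y-t)) powr (-a)"
proof -
  define f where "f = (\<lambda>t. A*(x+t)*(kx*(X+t)) powr (-a) + C*(y-t)*(ky*(Y-t)) powr (-a))"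
  define D where "D = A*(kx*X) powr (-a)*(1 - a*x/X) - C*(ky*Y) powr (-a)*(1 - a*y/Y)"
  have "(f has_real_derivative D) (at 0)"
    unfolding f_def
    using assms apply (auto intro!: derivative_eq_intros)
  proof -
    have p1: "(kx*X) powr (-a-1) = (kx*X) powr (-a) / (kx*X)" using assms by (simp add: powr_diff)
    have p2: "(ky*Y) powr (-a-1) = (ky*Y) powr (-a) / (ky*Y)" using assms by (simp add: powr_diff)
    show "A * (kx * X) powr - a - a * (kx * X) powr (- a - 1) * kx * (A * x) +
        (a * (ky * Y) powr (- a - 1) * ky * (C * y) - C * (ky * Y) powr - a) = D"
      unfolding p1 p2 D_def using assms by (simp add: field_simps)
  qed
  moreover have "D > 0" using cond by (simp add: D_def)
  ultimately obtain d where d: "d > 0" "\<And>h. h > 0 \<Longrightarrow> h < d \<Longrightarrow> f 0 < f (0 + h)"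
    using DERIV_pos_inc_right by blast
  define t where "t = min (d/2) (min (y/2) (e/2))"
  have t: "t > 0" "t < d" "t < y" "t < e" using d assms by (auto simp: t_def)
  have "f 0 < f t" using d(2)[OF t(1,2)] by simp
  thus ?thesis using t unfolding f_def by auto
qed



lemma sum_upd: "finite I \<Longrightarrow> i \<in> I \<Longrightarrow> sum (f(i:=v)) I = sum f I - f i + (v::real)"
proof -
  assume fin: "finite I" and i: "i \<in> I"
  have "sum (f(i:=v)) I = v + sum (f(i:=v)) (I - {i})" using sum.remove[OF fin i, of "f(i:=v)"] by simp
  also have "sum (f(i:=v)) (I - {i}) = sum f (I - {i})" by (rule sum.cong) auto
  also have "sum f (I - {i}) = sum f I - f i" using sum.remove[OF fin i, of f] by simp
  finally show ?thesis by simp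
qed

lemma inc_lemma:
  fixes a c b S d :: real
  assumes "0<a" "a<1" "c>0" "0\<le>b" "b\<le>S" "d>0"
  shows "b*(c*S) powr (-a) < (b+d)*(c*(S+d)) powr (-a)"
proof (cases "b = 0")
  case True thus ?thesis using assms by simp
next
  case False
  hence b0: "b > 0" "S > 0" using assms by auto
  define q where "q = (S+d)/S"
  have q1: "q > 1" using b0 assms by (simp add: q_def)
  have "q powr a < q powr 1" using q1 assms by (intro powr_less_mono) auto
  hence qa: "q powr a < q" using q1 by simp
  have "b * q powr a < b * q" using qa b0 by simp
  also have "b*q \<le> b + d" using b0 assms by (simp add: q_def field_simps mult_left_mono)
  finally have k: "b * q powr a < b + d" .
  have e: "(c*(S+d)) powr (-a) = (c*S) powr (-a) / q powr a"
  proof -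
    have "c*(S+d) = (c*S)*q" using b0 by (simp add: q_def)
    thus ?thesis using b0 q1 assms by (simp add: powr_mult powr_minus_divide)
  qed
  have cp: "(c*S) powr (-a) > 0" using b0 assms by simp
  have qp: "q powr a > 0" using q1 by simp
  have "b*(c*S) powr (-a) = (b * q powr a) * ((c*S) powr (-a) / q powr a)" using qp by simp
  also have "\<dots> < (b+d) * ((c*S) powr (-a) / q powr a)"
    using k cp qp by (intro mult_strict_right_mono) auto
  finally show ?thesis using e by simp
qed

lemma exists_ratio:
  fixes x y :: "'i \<Rightarrow> real"
  assumes fin: "finite I" and x: "\<forall>i\<in>I. x i \<ge> 0" and y: "\<forall>i\<in>I. y i \<ge> 0"
    and X: "sum x I > 0" and Y: "sum y I > 0"
  shows "\<exists>i\<in>I. y i > 0 \<and> y i / sum y I \<ge> x i / sum x I"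
proof (rule ccontr)
  assume H: "\<not> ?thesis"
  define J where "J = {i\<in>I. y i > 0}"
  have finJ: "finite J" using fin by (simp add: J_def)
  have sJ: "sum y J = sum y I"
    using fin y by (intro sum.mono_neutral_left) (auto simp: J_def)
  have Jne: "J \<noteq> {}" using sJ Y by auto
  have lt: "\<forall>i\<in>J. y i / sum y I < x i / sum x I" using H by (auto simp: J_def not_le)
  have "sum (\<lambda>i. y i / sum y I) J < sum (\<lambda>i. x i / sum x I) J"
    using finJ Jne lt by (intro sum_strict_mono) auto
  also have "sum (\<lambda>i. x i / sum x I) J = sum x J / sum x I" by (simp add: sum_divide_distrib)
  also have "sum x J \<le> sum x I" using fin x by (intro sum_mono2) (auto simp: J_def)
  hence "sum x J / sum x I \<le> 1" using X by simp
  finally have "sum y J / sum y I < 1" by (simp add: sum_divide_distrib)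
  thus False using sJ Y by simp
qed




context
  fixes I :: "'i set" and B B0 BM BS :: "'i \<Rightarrow> real" and R0 lS Nm Nf \<alpha> :: real
  assumes fin: "finite I" and Ine: "I \<noteq> {}" and Bp: "\<forall>i\<in>I. B i > 0"
    and B0: "\<forall>i\<in>I. 0 \<le> B0 i \<and> B0 i \<le> B i"
    and R0: "R0 > 0" and lS: "lS > 1" and Nm: "Nm > 0" and Nf: "Nf > 0" and a0: "0 < \<alpha>" and a1: "\<alpha> < 1"
    and NE: "is_NE R0 lS Nm Nf \<alpha> I B B0 BM BS"
begin

lemma feas: "\<forall>i\<in>I. BM i \<ge> 0 \<and> BS i \<ge> B0 i \<and> BM i + BS i \<le> B i"
  using NE by (simp add: is_NE_def feasible_def)

lemma BSnn: "\<forall>i\<in>I. BS i \<ge> 0" using feas B0 by force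

lemma rev_dev: "i\<in>I \<Longrightarrow> revenue R0 lS Nm Nf \<alpha> I (BM(i:=m)) (BS(i:=s)) i =
   lS*R0* s*((lS*R0/Nf)*(sum BS I - BS i + s)) powr (-\<alpha>) + R0*m*((R0/Nm)*(sum BM I - BM i + m)) powr (-\<alpha>)"
proof -
  assume i: "i\<in>I"
  have r1: "rate_S R0 lS Nf I (BS(i:=s)) = (lS*R0/Nf)*(sum BS I - BS i + s)"
    unfolding rate_S_def sum_upd[OF fin i] by simp
  have r2: "rate_M R0 Nm I (BM(i:=m)) = (R0/Nm)*(sum BM I - BM i + m)"
    unfolding rate_M_def sum_upd[OF fin i] by simp
  show ?thesis by (simp add: revenue_def r1 r2 mult_ac)
qed

lemma dev_le:
  assumes i: "i\<in>I" and "0 \<le> m" "B0 i \<le> s" "m + s \<le> B i"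
  shows "lS*R0* s*((lS*R0/Nf)*(sum BS I - BS i + s)) powr (-\<alpha>) + R0*m*((R0/Nm)*(sum BM I - BM i + m)) powr (-\<alpha>)
     \<le> lS*R0*BS i*((lS*R0/Nf)*(sum BS I)) powr (-\<alpha>) + R0*BM i*((R0/Nm)*(sum BM I)) powr (-\<alpha>)"
proof -
  have "feasible I B B0 (BM(i:=m)) (BS(i:=s))"
    using feas assms by (auto simp: feasible_def)
  hence "revenue R0 lS Nm Nf \<alpha> I (BM(i:=m)) (BS(i:=s)) i \<le> revenue R0 lS Nm Nf \<alpha> I BM BS i"
    using NE i by (simp add: is_NE_def)
  also have "revenue R0 lS Nm Nf \<alpha> I BM BS i = revenue R0 lS Nm Nf \<alpha> I (BM(i:=BM i)) (BS(i:=BS i)) i"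
    by simp
  finally show ?thesis unfolding rev_dev[OF i] by simp
qed

lemma full: "\<forall>i\<in>I. BM i + BS i = B i"
proof
  fix i assume i: "i \<in> I"
  show "BM i + BS i = B i"
  proof (rule ccontr)
    assume "BM i + BS i \<noteq> B i"
    hence lt: "BM i + BS i < B i" using feas i by force
    define d where "d = B i - BM i - BS i"
    have d: "d > 0" using lt by (simp add: d_def)
    have bS: "BS i \<le> sum BS I" using BSnn i fin by (intro member_le_sum) auto
    have "BS i*((lS*R0/Nf)* sum BS I) powr (-\<alpha>) < (BS i + d)*((lS*R0/Nf)*(sum BS I + d)) powr (-\<alpha>)"
      using inc_lemma[OF a0 a1, of "lS*R0/Nf" "BS i" "sum BS I" d] BSnn i bS d R0 lS Nf by auto
    hence "lS*R0*(BS i*((lS*R0/Nf)* sum BS I) powr (-\<alpha>)) < lS*R0*((BS i + d)*((lS*R0/Nf)*(sum BS I + d)) powr (-\<alpha>))"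
      using R0 lS by (intro mult_strict_left_mono) auto
    moreover have "lS*R0*(BS i + d)*((lS*R0/Nf)*(sum BS I - BS i + (BS i + d))) powr (-\<alpha>) + R0*BM i*((R0/Nm)*(sum BM I - BM i + BM i)) powr (-\<alpha>)
     \<le> lS*R0*BS i*((lS*R0/Nf)*(sum BS I)) powr (-\<alpha>) + R0*BM i*((R0/Nm)*(sum BM I)) powr (-\<alpha>)"
      using dev_le[OF i, of "BM i" "BS i + d"] feas i d by (auto simp: d_def)
    ultimately show False by (simp add: mult_ac)
  qed
qed

lemma Spos: "sum BS I > 0"
proof (rule ccontr)
  assume "\<not> sum BS I > 0"
  moreover have "sum BS I \<ge> 0" using BSnn by (simp add: sum_nonneg)
  ultimately have S0: "sum BS I = 0" by linarith
  hence BS0: "\<forall>i\<in>I. BS i = 0" using BSnn fin sum_nonneg_eq_0_iff by blast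
  obtain i where i: "i \<in> I" using Ine by auto
  have BSi: "BS i = 0" using BS0 i by blast
  have BMi: "BM i = B i" using full BSi i by force
  have BMp: "BM i > 0" using BMi Bp i by auto
  have B00: "B0 i = 0" using B0 feas BSi i by force
  have bM: "BM i \<le> sum BM I" using feas i fin by (intro member_le_sum) auto
  have "\<exists>t>0. t<BM i \<and> t<1 \<and> R0 * BM i*((R0/Nm)* sum BM I) powr (-\<alpha>) < lS*R0*t*((lS*R0/Nf)*t) powr (-\<alpha>) + R0*(BM i-t)*((R0/Nm)*(sum BM I-t)) powr (-\<alpha>)"
    by (rule exch0[OF a0 a1]) (use BMp bM R0 lS Nf Nm in auto)
  then obtain t where t: "t>0" "t<BM i"
    "R0 * BM i*((R0/Nm)* sum BM I) powr (-\<alpha>) < lS*R0*t*((lS*R0/Nf)*t) powr (-\<alpha>) + R0*(BM i-t)*((R0/Nm)*(sum BM I-t)) powr (-\<alpha>)"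
    by blast
  have "lS*R0*t*((lS*R0/Nf)*(sum BS I - BS i + t)) powr (-\<alpha>) + R0*(BM i - t)*((R0/Nm)*(sum BM I - BM i + (BM i - t))) powr (-\<alpha>)
     \<le> lS*R0*BS i*((lS*R0/Nf)*(sum BS I)) powr (-\<alpha>) + R0*BM i*((R0/Nm)*(sum BM I)) powr (-\<alpha>)"
    by (rule dev_le[OF i]) (use t B00 BMi in auto)
  moreover have "sum BS I - BS i + t = t" using S0 BSi by simp
  moreover have "sum BM I - BM i + (BM i - t) = sum BM I - t" by simp
  ultimately have "lS*R0*t*((lS*R0/Nf)*t) powr (-\<alpha>) + R0*(BM i - t)*((R0/Nm)*(sum BM I - t)) powr (-\<alpha>)
     \<le> R0*BM i*((R0/Nm)*(sum BM I)) powr (-\<alpha>)" using BSi by simp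
  thus False using t(3) by linarith
qed

lemma PSle:
  assumes M: "sum BM I > 0"
  shows "lS*R0*((lS*R0/Nf)* sum BS I) powr (-\<alpha>) \<le> R0*((R0/Nm)* sum BM I) powr (-\<alpha>)"
proof (rule ccontr)
  assume H: "\<not> ?thesis"
  obtain i where i: "i\<in>I" "BM i > 0" "BM i / sum BM I \<ge> BS i / sum BS I"
    using exists_ratio[OF fin, of BS BM] BSnn feas Spos M by auto
  have bS: "BS i \<le> sum BS I" using BSnn i fin by (intro member_le_sum) auto
  have bM: "BM i \<le> sum BM I" using feas i fin by (intro member_le_sum) auto
  have q: "BM i / sum BM I \<le> 1" using bM M by simp
  have f1: "1 - \<alpha>*BM i/sum BM I > 0"
  proof -
    have "\<alpha>*(BM i/sum BM I) \<le> \<alpha>*1" using q a0 by (intro mult_left_mono) auto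
    hence "\<alpha>*(BM i/sum BM I) < 1" using a1 by linarith
    thus ?thesis by simp
  qed
  have "\<alpha>*(BS i/sum BS I) \<le> \<alpha>*(BM i/sum BM I)" using i(3) a0 by (intro mult_left_mono) auto
  hence f2: "1 - \<alpha>*BS i/sum BS I \<ge> 1 - \<alpha>*BM i/sum BM I" by simp
  have "lS*R0*((lS*R0/Nf)* sum BS I) powr (-\<alpha>)*(1 - \<alpha>*BS i/sum BS I) \<ge> lS*R0*((lS*R0/Nf)* sum BS I) powr (-\<alpha>)*(1 - \<alpha>*BM i/sum BM I)"
    using f2 R0 lS by (intro mult_left_mono) auto
  moreover have "lS*R0*((lS*R0/Nf)* sum BS I) powr (-\<alpha>)*(1 - \<alpha>*BM i/sum BM I) > R0*((R0/Nm)* sum BM I) powr (-\<alpha>)*(1 - \<alpha>*BM i/sum BM I)"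
    using H f1 by (intro mult_strict_right_mono) auto
  ultimately have cond: "lS*R0*((lS*R0/Nf)* sum BS I) powr (-\<alpha>)*(1 - \<alpha>*BS i/sum BS I) > R0*((R0/Nm)* sum BM I) powr (-\<alpha>)*(1 - \<alpha>*BM i/sum BM I)"
    by linarith
  have "\<exists>t>0. t<BM i \<and> t<1 \<and> lS*R0*BS i*((lS*R0/Nf)* sum BS I) powr (-\<alpha>) + R0*BM i*((R0/Nm)* sum BM I) powr (-\<alpha>)
      < lS*R0*(BS i+t)*((lS*R0/Nf)*(sum BS I+t)) powr (-\<alpha>) + R0*(BM i-t)*((R0/Nm)*(sum BM I-t)) powr (-\<alpha>)"
    by (rule exch[OF a0 a1 _ _ _ _ _ _ _ _ _ _ cond]) (use BSnn i bS bM Spos M R0 lS Nf Nm in auto)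
  then obtain t where t: "t>0" "t<BM i"
    "lS*R0*BS i*((lS*R0/Nf)* sum BS I) powr (-\<alpha>) + R0*BM i*((R0/Nm)* sum BM I) powr (-\<alpha>)
      < lS*R0*(BS i+t)*((lS*R0/Nf)*(sum BS I+t)) powr (-\<alpha>) + R0*(BM i-t)*((R0/Nm)*(sum BM I-t)) powr (-\<alpha>)"
    by blast
  have "lS*R0*(BS i + t)*((lS*R0/Nf)*(sum BS I - BS i + (BS i + t))) powr (-\<alpha>) + R0*(BM i - t)*((R0/Nm)*(sum BM I - BM i + (BM i - t))) powr (-\<alpha>)
     \<le> lS*R0*BS i*((lS*R0/Nf)*(sum BS I)) powr (-\<alpha>) + R0*BM i*((R0/Nm)*(sum BM I)) powr (-\<alpha>)"
    by (rule dev_le[OF i(1)]) (use t feas i in auto)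
  moreover have "sum BS I - BS i + (BS i + t) = sum BS I + t" by simp
  moreover have "sum BM I - BM i + (BM i - t) = sum BM I - t" by simp
  ultimately show False using t(3) by simp
qed

lemma M0:
  assumes M: "sum BM I = 0"
  shows "\<forall>i\<in>I. B0 i = B i"
proof (rule ccontr)
  assume "\<not> ?thesis"
  then obtain i where i: "i\<in>I" "B0 i \<noteq> B i" by auto
  have BM0: "\<forall>i\<in>I. BM i = 0" using feas fin M sum_nonneg_eq_0_iff by blast
  have BSi: "BS i = B i" using full BM0 i by force
  have lt: "B0 i < BS i" using B0 i BSi by force
  have bS: "BS i \<le> sum BS I" using BSnn i fin by (intro member_le_sum) auto
  have BSp: "BS i > 0" using lt B0 i by force
  have "\<exists>t>0. t<BS i \<and> t < BS i - B0 i \<and> lS*R0*BS i*((lS*R0/Nf)* sum BS I) powr (-\<alpha>) < R0*t*((R0/Nm)*t) powr (-\<alpha>) + lS*R0*(BS i-t)*((lS*R0/Nf)*(sum BS I-t)) powr (-\<alpha>)"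
    by (rule exch0[OF a0 a1]) (use BSp bS lt R0 lS Nf Nm in auto)
  then obtain t where t: "t>0" "t<BS i" "t < BS i - B0 i"
    "lS*R0*BS i*((lS*R0/Nf)* sum BS I) powr (-\<alpha>) < R0*t*((R0/Nm)*t) powr (-\<alpha>) + lS*R0*(BS i-t)*((lS*R0/Nf)*(sum BS I-t)) powr (-\<alpha>)"
    by blast
  have "lS*R0*(BS i - t)*((lS*R0/Nf)*(sum BS I - BS i + (BS i - t))) powr (-\<alpha>) + R0*t*((R0/Nm)*(sum BM I - BM i + t)) powr (-\<alpha>)
     \<le> lS*R0*BS i*((lS*R0/Nf)*(sum BS I)) powr (-\<alpha>) + R0*BM i*((R0/Nm)*(sum BM I)) powr (-\<alpha>)"
    by (rule dev_le[OF i(1)]) (use t BSi in auto)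
  moreover have "sum BS I - BS i + (BS i - t) = sum BS I - t" by simp
  moreover have "sum BM I - BM i + t = t" using M BM0 i by simp
  moreover have "BM i = 0" using BM0 i by simp
  ultimately show False using t(4) by simp
qed

lemma PSge:
  assumes Z: "\<forall>i\<in>I. B0 i = 0" and M: "sum BM I > 0"
  shows "R0*((R0/Nm)* sum BM I) powr (-\<alpha>) \<le> lS*R0*((lS*R0/Nf)* sum BS I) powr (-\<alpha>)"
proof (rule ccontr)
  assume H: "\<not> ?thesis"
  obtain i where i: "i\<in>I" "BS i > 0" "BS i / sum BS I \<ge> BM i / sum BM I"
    using exists_ratio[OF fin, of BM BS] BSnn feas Spos M by auto
  have bS: "BS i \<le> sum BS I" using BSnn i fin by (intro member_le_sum) auto
  have bM: "BM i \<le> sum BM I" using feas i fin by (intro member_le_sum) auto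
  have q: "BS i / sum BS I \<le> 1" using bS Spos by simp
  have f1: "1 - \<alpha>*BS i/sum BS I > 0"
  proof -
    have "\<alpha>*(BS i/sum BS I) \<le> \<alpha>*1" using q a0 by (intro mult_left_mono) auto
    hence "\<alpha>*(BS i/sum BS I) < 1" using a1 by linarith
    thus ?thesis by simp
  qed
  have "\<alpha>*(BM i/sum BM I) \<le> \<alpha>*(BS i/sum BS I)" using i(3) a0 by (intro mult_left_mono) auto
  hence f2: "1 - \<alpha>*BM i/sum BM I \<ge> 1 - \<alpha>*BS i/sum BS I" by simp
  have "R0*((R0/Nm)* sum BM I) powr (-\<alpha>)*(1 - \<alpha>*BM i/sum BM I) \<ge> R0*((R0/Nm)* sum BM I) powr (-\<alpha>)*(1 - \<alpha>*BS i/sum BS I)"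
    using f2 R0 by (intro mult_left_mono) auto
  moreover have "R0*((R0/Nm)* sum BM I) powr (-\<alpha>)*(1 - \<alpha>*BS i/sum BS I) > lS*R0*((lS*R0/Nf)* sum BS I) powr (-\<alpha>)*(1 - \<alpha>*BS i/sum BS I)"
    using H f1 by (intro mult_strict_right_mono) auto
  ultimately have cond: "R0*((R0/Nm)* sum BM I) powr (-\<alpha>)*(1 - \<alpha>*BM i/sum BM I) > lS*R0*((lS*R0/Nf)* sum BS I) powr (-\<alpha>)*(1 - \<alpha>*BS i/sum BS I)"
    by linarith
  have "\<exists>t>0. t<BS i \<and> t<1 \<and> R0*BM i*((R0/Nm)* sum BM I) powr (-\<alpha>) + lS*R0*BS i*((lS*R0/Nf)* sum BS I) powr (-\<alpha>)
      < R0*(BM i+t)*((R0/Nm)*(sum BM I+t)) powr (-\<alpha>) + lS*R0*(BS i-t)*((lS*R0/Nf)*(sum BS I-t)) powr (-\<alpha>)"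
    by (rule exch[OF a0 a1 _ _ _ _ _ _ _ _ _ _ cond]) (use feas i bS bM Spos M R0 lS Nf Nm in auto)
  then obtain t where t: "t>0" "t<BS i"
    "R0*BM i*((R0/Nm)* sum BM I) powr (-\<alpha>) + lS*R0*BS i*((lS*R0/Nf)* sum BS I) powr (-\<alpha>)
      < R0*(BM i+t)*((R0/Nm)*(sum BM I+t)) powr (-\<alpha>) + lS*R0*(BS i-t)*((lS*R0/Nf)*(sum BS I-t)) powr (-\<alpha>)"
    by blast
  have "lS*R0*(BS i - t)*((lS*R0/Nf)*(sum BS I - BS i + (BS i - t))) powr (-\<alpha>) + R0*(BM i + t)*((R0/Nm)*(sum BM I - BM i + (BM i + t))) powr (-\<alpha>)
     \<le> lS*R0*BS i*((lS*R0/Nf)*(sum BS I)) powr (-\<alpha>) + R0*BM i*((R0/Nm)*(sum BM I)) powr (-\<alpha>)"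
    by (rule dev_le[OF i(1)]) (use t feas i Z in auto)
  moreover have "sum BS I - BS i + (BS i - t) = sum BS I - t" by simp
  moreover have "sum BM I - BM i + (BM i + t) = sum BM I + t" by simp
  ultimately show False using t(3) by simp
qed

end



lemma welfare_tan:
  fixes a R0 lS Nm Nf Mp Sp Mq Sq :: real
  assumes "0<a" "a<1" "R0>0" "lS>0" "Nm>0" "Nf>0" "Mp>0" "Sp>0" "Mq\<ge>0" "Sq\<ge>0" "Mq+Sq = Mp+Sp"
  shows "Nm*((R0/Nm)*Mq) powr (1-a) + Nf*((lS*R0/Nf)*Sq) powr (1-a) \<le>
    Nm*((R0/Nm)*Mp) powr (1-a) + Nf*((lS*R0/Nf)*Sp) powr (1-a)
    + (1-a)*(Sq-Sp)*(lS*R0*((lS*R0/Nf)*Sp) powr (-a) - R0*((R0/Nm)*Mp) powr (-a))"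
    and "Sq \<noteq> Sp \<Longrightarrow> Nm*((R0/Nm)*Mq) powr (1-a) + Nf*((lS*R0/Nf)*Sq) powr (1-a) <
    Nm*((R0/Nm)*Mp) powr (1-a) + Nf*((lS*R0/Nf)*Sp) powr (1-a)
    + (1-a)*(Sq-Sp)*(lS*R0*((lS*R0/Nf)*Sp) powr (-a) - R0*((R0/Nm)*Mp) powr (-a))"
proof -
  define u1 v1 u2 v2 where "u1 = (R0/Nm)*Mq" "v1 = (R0/Nm)*Mp" "u2 = (lS*R0/Nf)*Sq" "v2 = (lS*R0/Nf)*Sp"
  have pos: "u1 \<ge> 0" "v1 > 0" "u2 \<ge> 0" "v2 > 0" using assms by (auto simp: u1_v1_u2_v2_def)
  define P1 P2 where "P1 = v1 powr (-a)" "P2 = v2 powr (-a)"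
  define L where "L = (1-a)*(Sq-Sp)*(lS*R0*P2 - R0*P1)"
  have e1: "Mq - Mp = -(Sq - Sp)" using assms by simp
  have e2: "Nm*(u1 - v1) = R0*(Mq-Mp)" using assms by (simp add: u1_v1_u2_v2_def field_simps)
  have e3: "Nm*(u1 - v1) = - R0*(Sq-Sp)" unfolding e2 e1 by (simp add: right_diff_distrib)
  have e4: "Nf*(u2 - v2) = lS*R0*(Sq-Sp)" using assms by (simp add: u1_v1_u2_v2_def field_simps)
  have lin: "Nm*((1-a)*P1*(u1-v1)) + Nf*((1-a)*P2*(u2-v2)) = L"
  proof -
    have "Nm*((1-a)*P1*(u1-v1)) + Nf*((1-a)*P2*(u2-v2)) = (1-a)*P1*(Nm*(u1-v1)) + (1-a)*P2*(Nf*(u2-v2))"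
      by (simp only: mult_ac)
    also have "\<dots> = (1-a)*P1*(- R0*(Sq-Sp)) + (1-a)*P2*(lS*R0*(Sq-Sp))" by (simp only: e3 e4)
    also have "\<dots> = L" unfolding L_def by (simp add: algebra_simps)
    finally show ?thesis .
  qed
  have t1: "u1 powr (1-a) \<le> v1 powr (1-a) + (1-a)*P1*(u1-v1)"
    using tangent_le[OF assms(1,2) pos(1,2)] unfolding P1_P2_def .
  have t2: "u2 powr (1-a) \<le> v2 powr (1-a) + (1-a)*P2*(u2-v2)"
    using tangent_le[OF assms(1,2) pos(3,4)] unfolding P1_P2_def .
  have m1: "Nm* u1 powr (1-a) \<le> Nm* v1 powr (1-a) + Nm*((1-a)*P1*(u1-v1))"
    using mult_left_mono[OF t1, of Nm] assms by (simp add: distrib_left)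
  have m2: "Nf* u2 powr (1-a) \<le> Nf* v2 powr (1-a) + Nf*((1-a)*P2*(u2-v2))"
    using mult_left_mono[OF t2, of Nf] assms by (simp add: distrib_left)
  have Lf: "(1-a)*(Sq-Sp)*(lS*R0*((lS*R0/Nf)*Sp) powr (-a) - R0*((R0/Nm)*Mp) powr (-a)) = L"
    unfolding L_def P1_P2_def u1_v1_u2_v2_def ..
  show "Nm*((R0/Nm)*Mq) powr (1-a) + Nf*((lS*R0/Nf)*Sq) powr (1-a) \<le>
    Nm*((R0/Nm)*Mp) powr (1-a) + Nf*((lS*R0/Nf)*Sp) powr (1-a)
    + (1-a)*(Sq-Sp)*(lS*R0*((lS*R0/Nf)*Sp) powr (-a) - R0*((R0/Nm)*Mp) powr (-a))"
    unfolding Lf unfolding u1_v1_u2_v2_def[symmetric] using m1 m2 lin by linarith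
  assume ne: "Sq \<noteq> Sp"
  have "u2 \<noteq> v2" using ne assms by (simp add: u1_v1_u2_v2_def)
  hence t2s: "u2 powr (1-a) < v2 powr (1-a) + (1-a)*P2*(u2-v2)"
    using tangent_strict[OF assms(1,2) pos(3,4)] unfolding P1_P2_def by blast
  have m2s: "Nf* u2 powr (1-a) < Nf* v2 powr (1-a) + Nf*((1-a)*P2*(u2-v2))"
    using mult_strict_left_mono[OF t2s, of Nf] assms by (simp add: distrib_left)
  show "Nm*((R0/Nm)*Mq) powr (1-a) + Nf*((lS*R0/Nf)*Sq) powr (1-a) <
    Nm*((R0/Nm)*Mp) powr (1-a) + Nf*((lS*R0/Nf)*Sp) powr (1-a)
    + (1-a)*(Sq-Sp)*(lS*R0*((lS*R0/Nf)*Sp) powr (-a) - R0*((R0/Nm)*Mp) powr (-a))"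
    unfolding Lf unfolding u1_v1_u2_v2_def[symmetric] using m1 m2s lin by linarith
qed




theorem theorem3:
  fixes I :: "'i set" and B B0 BMw BSw BMo BSo :: "'i \<Rightarrow> real"
    and R0 lS Nm Nf \<alpha> :: real
  assumes "finite I" and "I \<noteq> {}"
    and "\<forall>i\<in>I. B i > 0" and "\<forall>i\<in>I. 0 \<le> B0 i \<and> B0 i \<le> B i"
    and "R0 > 0" and "lS > 1" and "Nm > 0" and "Nf > 0" and "0 < \<alpha>" and "\<alpha> < 1"
    and NEw: "is_NE R0 lS Nm Nf \<alpha> I B B0 BMw BSw"
    and NEo: "is_NE R0 lS Nm Nf \<alpha> I B (\<lambda>_. 0) BMo BSo"
  shows "let a = Nf * lS powr (1 / \<alpha> - 1);
             SWw = social_welfare R0 lS Nm Nf \<alpha> I BMw BSw;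
             SWo = social_welfare R0 lS Nm Nf \<alpha> I BMo BSo
         in (a / (a + Nm) * (\<Sum>i\<in>I. B i) < (\<Sum>i\<in>I. B0 i) \<longrightarrow> SWw < SWo)
            \<and> SWw / SWo \<ge> (a / (a + Nm)) powr \<alpha>
            \<and> (SWw / SWo = (a / (a + Nm)) powr \<alpha> \<longleftrightarrow> (\<forall>i\<in>I. B0 i = B i))"
proof -
  note H = assms(1-10)
  have fin: "finite I" and Ine: "I \<noteq> {}" and Bp: "\<forall>i\<in>I. B i > 0"
    and R0: "R0 > 0" and lS: "lS > 1" and Nm: "Nm > 0" and Nf: "Nf > 0" and a0: "0 < \<alpha>" and a1: "\<alpha> < 1"
    using assms by auto
  have Z: "\<forall>i\<in>I. 0 \<le> (\<lambda>_. 0::real) i \<and> (\<lambda>_. 0::real) i \<le> B i" using Bp by auto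
  define T where "T = sum B I"
  define Sw Mw So Mo where "Sw = sum BSw I" "Mw = sum BMw I" "So = sum BSo I" "Mo = sum BMo I"
  define a where "a = Nf * lS powr (1 / \<alpha> - 1)"
  define L where "L = lS powr (1/\<alpha>)"
  define W where "W = (\<lambda>M S. Nm*((R0/Nm)*M) powr (1-\<alpha>) + Nf*((lS*R0/Nf)*S) powr (1-\<alpha>))"
  define PS PM where "PS = (\<lambda>S. lS*R0*((lS*R0/Nf)*S) powr (-\<alpha>))" "PM = (\<lambda>M. R0*((R0/Nm)*M) powr (-\<alpha>))"
  have a_pos: "a > 0" using Nf lS by (simp add: a_def)
  have L_pos: "L > 0" using lS by (simp add: L_def)
  have aL: "a = Nf * L / lS" using lS by (simp add: a_def L_def powr_diff)
  have fullw: "\<forall>i\<in>I. BMw i + BSw i = B i" using full[OF H NEw] .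
  have fullo: "\<forall>i\<in>I. BMo i + BSo i = B i" using full[OF fin Ine Bp Z R0 lS Nm Nf a0 a1 NEo] .
  have Tw: "Mw + Sw = T" unfolding T_def Sw_Mw_So_Mo_def
    using fullw by (simp add: sum.distrib[symmetric])
  have To: "Mo + So = T" unfolding T_def Sw_Mw_So_Mo_def
    using fullo by (simp add: sum.distrib[symmetric])
  have Swp: "Sw > 0" unfolding Sw_Mw_So_Mo_def using Spos[OF H NEw] .
  have Sop: "So > 0" unfolding Sw_Mw_So_Mo_def using Spos[OF fin Ine Bp Z R0 lS Nm Nf a0 a1 NEo] .
  have Mwnn: "Mw \<ge> 0" unfolding Sw_Mw_So_Mo_def using feas[OF H NEw] by (simp add: sum_nonneg)
  have Mop: "Mo > 0"
  proof -
    have "Mo \<ge> 0" unfolding Sw_Mw_So_Mo_def using feas[OF fin Ine Bp Z R0 lS Nm Nf a0 a1 NEo] by (simp add: sum_nonneg)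
    moreover have "Mo \<noteq> 0"
    proof
      assume "Mo = 0"
      hence "\<forall>i\<in>I. (0::real) = B i" using M0[OF fin Ine Bp Z R0 lS Nm Nf a0 a1 NEo] unfolding Sw_Mw_So_Mo_def by blast
      thus False using Bp Ine by fastforce
    qed
    ultimately show ?thesis by simp
  qed
  have PSw: "Mw > 0 \<Longrightarrow> PS Sw \<le> PM Mw"
    unfolding PS_PM_def Sw_Mw_So_Mo_def using PSle[OF H NEw] by blast
  have Mw0: "Mw = 0 \<Longrightarrow> \<forall>i\<in>I. B0 i = B i"
    unfolding Sw_Mw_So_Mo_def using M0[OF H NEw] by blast
  have PSo: "PS So = PM Mo"
  proof -
    have "PS So \<le> PM Mo" unfolding PS_PM_def Sw_Mw_So_Mo_def
      using PSle[OF fin Ine Bp Z R0 lS Nm Nf a0 a1 NEo] Mop unfolding Sw_Mw_So_Mo_def by blast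
    moreover have "PM Mo \<le> PS So" unfolding PS_PM_def Sw_Mw_So_Mo_def
      using PSge[OF fin Ine Bp Z R0 lS Nm Nf a0 a1 NEo] Mop unfolding Sw_Mw_So_Mo_def by blast
    ultimately show ?thesis by simp
  qed
  have B0w: "(\<forall>i\<in>I. B0 i = B i) \<Longrightarrow> Mw = 0"
  proof -
    assume E: "\<forall>i\<in>I. B0 i = B i"
    have "\<forall>i\<in>I. BMw i = 0" using feas[OF H NEw] E by force
    thus "Mw = 0" unfolding Sw_Mw_So_Mo_def by simp
  qed
  have SwB0: "Sw \<ge> sum B0 I" unfolding Sw_Mw_So_Mo_def using feas[OF H NEw] by (intro sum_mono) auto
  define u x where "u = (lS*R0/Nf)*So" "x = (R0/Nm)*Mo"
  have ux: "u > 0" "x > 0" using Sop Mop R0 lS Nf Nm by (auto simp: u_x_def)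
  have uLx: "u = L * x"
  proof -
    have "lS * u powr (-\<alpha>) = x powr (-\<alpha>)" using PSo R0 unfolding PS_PM_def u_x_def by simp
    hence "lS = u powr \<alpha> / x powr \<alpha>" using ux by (simp add: powr_minus_divide field_simps)
    hence "lS = (u/x) powr \<alpha>" using ux by (simp add: powr_divide)
    hence "L = ((u/x) powr \<alpha>) powr (1/\<alpha>)" by (simp add: L_def)
    also have "\<dots> = u/x" using ux a0 by (simp add: powr_powr)
    finally show ?thesis using ux by (simp add: field_simps)
  qed
  have SoNm: "So * Nm = a * Mo"
  proof -
    have "lS*R0/Nf*So = L*(R0/Nm*Mo)" using uLx by (simp add: u_x_def)
    hence h: "Nm * (So * lS) = L * (Mo * Nf)" using R0 lS Nf Nm by (simp add: field_simps)
    have "So * Nm = (Nf * L / lS) * Mo" using h lS by (simp add: field_simps mult_ac)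
    thus ?thesis using aL by simp
  qed
  have SoT: "So*(a+Nm) = a*T"
  proof -
    have "So*(a+Nm) = a*(Mo+So)" using SoNm by (simp add: algebra_simps)
    thus ?thesis using To by simp
  qed
  have So_eq: "So = a * T / (a + Nm)"
  proof -
    have "So*(a+Nm) = a*(Mo+So)" using SoNm by (simp add: algebra_simps)
    hence SoT: "So*(a+Nm) = a*T" using To by simp
    thus ?thesis using a_pos Nm by (simp add: field_simps)
  qed
  have La: "Nf * L powr (1-\<alpha>) = a"
  proof -
    have "L powr (1-\<alpha>) = lS powr (1/\<alpha> - 1)" using a0 by (simp add: L_def powr_powr field_simps)
    thus ?thesis by (simp add: a_def)
  qed
  have Wo: "W Mo So = x powr (1-\<alpha>) * (Nm + a)"
  proof -
    have "W Mo So = Nm * x powr (1-\<alpha>) + Nf * (L*x) powr (1-\<alpha>)"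
      unfolding W_def u_x_def[symmetric] uLx ..
    also have "\<dots> = Nm * x powr (1-\<alpha>) + (Nf * L powr (1-\<alpha>)) * x powr (1-\<alpha>)"
      using ux L_pos by (simp add: powr_mult)
    finally show ?thesis unfolding La by (simp add: algebra_simps)
  qed
  define k where "k = (a + Nm)/a"
  have k_pos: "k > 0" using a_pos Nm by (simp add: k_def)
  have WT: "W 0 T = a * x powr (1-\<alpha>) * k powr (1-\<alpha>)"
  proof -
    have Sk: "So*k = T" using SoT a_pos by (simp add: k_def field_simps)
    have "u*k = (lS*R0/Nf)*(So*k)" unfolding u_x_def by (simp only: mult.assoc)
    hence "(lS*R0/Nf)*T = u * k" using Sk by simp
    hence "W 0 T = Nf * (L*x*k) powr (1-\<alpha>)" unfolding W_def uLx by simp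
    also have "\<dots> = (Nf * L powr (1-\<alpha>)) * x powr (1-\<alpha>) * k powr (1-\<alpha>)"
      using ux L_pos k_pos by (simp add: powr_mult)
    finally show ?thesis unfolding La .
  qed
  define r where "r = (a/(a+Nm)) powr \<alpha>"
  have WTr: "W 0 T = r * W Mo So"
  proof -
    have "a * k powr (1-\<alpha>) = a * k / k powr \<alpha>" using k_pos by (simp add: powr_diff)
    also have "\<dots> = (a + Nm) * r" using k_pos a_pos Nm
      by (simp add: k_def r_def powr_divide field_simps)
    finally have eq: "a * k powr (1-\<alpha>) = (a + Nm) * r" .
    have "W 0 T = (a * k powr (1-\<alpha>)) * x powr (1-\<alpha>)" unfolding WT by (simp only: mult_ac)
    also have "\<dots> = ((a+Nm)*r) * x powr (1-\<alpha>)" unfolding eq ..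
    also have "\<dots> = r * W Mo So" unfolding Wo by (simp add: algebra_simps)
    finally show ?thesis .
  qed
  have Wo_pos: "W Mo So > 0" unfolding Wo using ux a_pos Nm by simp
  have lSp: "lS > 0" using lS by simp
  have Tnn: "T \<ge> 0" using Tw Mwnn Swp by simp
  have cmp1: "Mw > 0 \<Longrightarrow> W 0 T < W Mw Sw"
  proof -
    assume Mwp: "Mw > 0"
    have ne: "T \<noteq> Sw" using Tw Mwp by simp
    have "W 0 T < W Mw Sw + (1-\<alpha>)*(T-Sw)*(PS Sw - PM Mw)"
      unfolding W_def PS_PM_def
      using welfare_tan(2)[OF a0 a1 R0 lSp Nm Nf Mwp Swp order.refl Tnn _ ne] Tw by simp
    moreover have "(1-\<alpha>)*(T-Sw)*(PS Sw - PM Mw) \<le> 0"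
      using PSw[OF Mwp] a1 Tw Mwp by (intro mult_nonneg_nonpos) auto
    ultimately show ?thesis by linarith
  qed
  have cmp0: "Mw = 0 \<Longrightarrow> W Mw Sw = W 0 T" using Tw by simp
  have SWeq: "\<And>BM BS. social_welfare R0 lS Nm Nf \<alpha> I BM BS = W (sum BM I) (sum BS I) / (1-\<alpha>)"
    unfolding social_welfare_def util_def rate_M_def rate_S_def W_def by (simp add: add_divide_distrib)
  have ratio: "social_welfare R0 lS Nm Nf \<alpha> I BMw BSw / social_welfare R0 lS Nm Nf \<alpha> I BMo BSo = W Mw Sw / W Mo So"
    unfolding SWeq Sw_Mw_So_Mo_def[symmetric] using a1 by simp
  have part1: "a / (a + Nm) * T < sum B0 I \<Longrightarrow> social_welfare R0 lS Nm Nf \<alpha> I BMw BSw < social_welfare R0 lS Nm Nf \<alpha> I BMo BSo"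
  proof -
    assume hyp: "a / (a + Nm) * T < sum B0 I"
    have ne: "Sw \<noteq> So" using hyp SwB0 So_eq by simp
    have "W Mw Sw < W Mo So + (1-\<alpha>)*(Sw-So)*(PS So - PM Mo)"
      unfolding W_def PS_PM_def
      using welfare_tan(2)[OF a0 a1 R0 lSp Nm Nf Mop Sop Mwnn _ _ ne] Swp Tw To by simp
    hence "W Mw Sw < W Mo So" using PSo by simp
    thus ?thesis unfolding SWeq Sw_Mw_So_Mo_def[symmetric] using a1 by (simp add: divide_strict_right_mono)
  qed
  have geq: "W Mw Sw / W Mo So \<ge> r"
  proof (cases "Mw = 0")
    case True thus ?thesis using cmp0 WTr Wo_pos by simp
  next
    case False hence "Mw > 0" using Mwnn by simp
    thus ?thesis using cmp1 WTr Wo_pos by (simp add: field_simps)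
  qed
  have eqv: "W Mw Sw / W Mo So = r \<longleftrightarrow> (\<forall>i\<in>I. B0 i = B i)"
  proof
    assume "W Mw Sw / W Mo So = r"
    hence "W Mw Sw = W 0 T" using WTr Wo_pos by (simp add: field_simps)
    hence "Mw = 0" using cmp1 Mwnn by force
    thus "\<forall>i\<in>I. B0 i = B i" using Mw0 by blast
  next
    assume "\<forall>i\<in>I. B0 i = B i"
    hence "Mw = 0" using B0w by blast
    thus "W Mw Sw / W Mo So = r" using cmp0 WTr Wo_pos by simp
  qed
  show ?thesis unfolding Let_def a_def[symmetric] T_def[symmetric] ratio r_def[symmetric]
    using part1 geq eqv by blast
qed


end
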